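(* Let $\phi$ be an LTL formula. (f) Every finite chain of $\mathbf{AX}^{gen}$-atoms of $\phi$ is extensible (i.e., is a prefix of) an acceptable chain of $\mathbf{AX}^{gen}$-atoms, finite or infinite. (g) Every finite chain of $\mathbf{AX}^{inf}$-atoms of $\phi$ is extensible to an infinite acceptable chain of $\mathbf{AX}^{inf}$-atoms. (h) Every finite chain of $\mathbf{AX}^{fin}$-atoms of $\phi$ is extensible to a finite acceptable chain of $\mathbf{AX}^{fin}$-atoms.
   Context: LTL formulas: grammar $\phi ::= p\mid\neg\phi\mid\phi\wedge\psi\mid\bigcirc\phi\mid\phi\,\mathcal{U}\,\psi$ over propositions $p\in\Phi_0$; $\vee,\Rightarrow$ standard abbreviations; $\mathit{true}$ a fixed tautology, $\mathit{false}:=\neg\mathit{true}$, $\Diamond\phi:=\mathit{true}\,\mathcal{U}\,\phi$, $\overline{\bigcirc}\phi:=\neg\bigcirc\neg\phi$. Axiomatizations: $\mathbf{AX}^{gen}$ consists of Prop (all propositional tautology instances), MP (from $\phi$, $\phi\Rightarrow\psi$ infer $\psi$), T1: $\bigcirc\phi\wedge\bigcirc(\phi\Rightarrow\psi)\Rightarrow\bigcirc\psi$, T2': $\phi\,\mathcal{U}\,\psi\Leftrightarrow\psi\vee(\phi\wedge\overline{\bigcirc}(\phi\,\mathcal{U}\,\psi))$, T3': $\bigcirc\phi\Leftrightarrow(\bigcirc\mathit{false}\vee\overline{\bigcirc}\phi)$, RT1 (from $\phi$ infer $\bigcirc\phi$), RT2 (from $\phi'\Rightarrow\neg\psi\wedge\bigcirc\phi'$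 infer $\phi'\Rightarrow\neg(\phi\,\mathcal{U}\,\psi)$). $\mathbf{AX}^{inf}$ adds $\neg\bigcirc\mathit{false}$; $\mathbf{AX}^{fin}$ adds $\Diamond\bigcirc\mathit{false}$. For an axiomatization $ax$, a formula is $ax$-consistent if its negation is not provable in $ax$; a finite set is consistent if its conjunction is. Closure: $Cl'(\phi)$ is the smallest set $S$ with $\phi\in S$; $\mathit{true}\,\mathcal{U}\,\bigcirc\mathit{false}\in S$; $\neg\psi\in S\Rightarrow\psi\in S$; $\psi_1\wedge\psi_2\in S\Rightarrow\psi_1,\psi_2\in S$; $\bigcirc\psi\in S\Rightarrow\psi\in S$; $\bigcirc\neg\psi\in S\Rightarrow\bigcirc\psi\in S$; $\psi_1\,\mathcal{U}\,\psi_2\in S\Rightarrow\psi_1,\psi_2,\overline{\bigcirc}(\psi_1\,\mathcal{U}\,\psi_2)\in S$. $Cl(\phi)=Cl'(\phi)\cup\{\neg\psi:\psi\in Cl'(\phi)\}$. An $ax$-atom of $\phi$ is a maximal $ax$-consistent subset of $Cl(\phi)$; $\widehat V$ is the conjunction of its formulas. $V\to_{ax}W$ iff $\widehat V\wedge\overline{\bigcirc}\widehat W$ is $ax$-consistent. A chain of $ax$-atoms is a finite or infinite sequence $V_0,V_1,\dots$ with $V_i\to_{ax}V_{i+1}$ for consecutive indices. A chain is acceptable if for every index $i$ and every $\psi_1\,\mathcal{U}\,\psi_2\in V_i$ there is an index $j\ge i$ of the chain with $\psi_2\in V_j$ and $\psi_1\in V_i,\dots,V_{j-1}$. *)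

theory Defs
  imports Main "HOL-Library.Extended_Nat"
begin

datatype 'p ltl = Prop 'p | Neg "'p ltl" | And "'p ltl" "'p ltl"
  | Next "'p ltl" | Until "'p ltl" "'p ltl"

definition Or :: "'p ltl \<Rightarrow> 'p ltl \<Rightarrow> 'p ltl" where
  "Or a b = Neg (And (Neg a) (Neg b))"

definition Imp :: "'p ltl \<Rightarrow> 'p ltl \<Rightarrow> 'p ltl" where
  "Imp a b = Or (Neg a) b"

definition Iff :: "'p ltl \<Rightarrow> 'p ltl \<Rightarrow> 'p ltl" where
  "Iff a b = And (Imp a b) (Imp b a)"

definition TT :: "'p ltl" where
  "TT = Imp (Prop undefined) (Prop undefined)"

definition FF :: "'p ltl" where
  "FF = Neg TT"

definition Ev :: "'p ltl \<Rightarrow> 'p ltl" where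
  "Ev a = Until TT a"

definition WNext :: "'p ltl \<Rightarrow> 'p ltl" where
  "WNext a = Neg (Next (Neg a))"

text \<open>Evaluate a formula propositionally, treating Prop, Next and Until formulas as atoms.\<close>
fun peval :: "('p ltl \<Rightarrow> bool) \<Rightarrow> 'p ltl \<Rightarrow> bool" where
  "peval v (Neg a) = (\<not> peval v a)"
| "peval v (And a b) = (peval v a \<and> peval v b)"
| "peval v a = v a"

definition taut :: "'p ltl \<Rightarrow> bool" where
  "taut a \<longleftrightarrow> (\<forall>v. peval v a)"

text \<open>Provability in AX-gen extended by a set of extra axioms.\<close>
inductive prov :: "'p ltl set \<Rightarrow> 'p ltl \<Rightarrow> bool" for E :: "'p ltl set" where
  Extra: "a \<in> E \<Longrightarrow> prov E a"
| Prop: "taut a \<Longrightarrow> prov E a"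
| MP: "prov E a \<Longrightarrow> prov E (Imp a b) \<Longrightarrow> prov E b"
| T1: "prov E (Imp (And (Next a) (Next (Imp a b))) (Next b))"
| T2': "prov E (Iff (Until a b) (Or b (And a (WNext (Until a b)))))"
| T3': "prov E (Iff (Next a) (Or (Next FF) (WNext a)))"
| RT1: "prov E a \<Longrightarrow> prov E (Next a)"
| RT2: "prov E (Imp c (And (Neg b) (Next c))) \<Longrightarrow> prov E (Imp c (Neg (Until a b)))"

definition AXgen :: "'p ltl set" where "AXgen = {}"
definition AXinf :: "'p ltl set" where "AXinf = {Neg (Next FF)}"
definition AXfin :: "'p ltl set" where "AXfin = {Ev (Next FF)}"

definition consistent :: "'p ltl set \<Rightarrow> 'p ltl \<Rightarrow> bool" where
  "consistent E a \<longleftrightarrow> \<not> prov E (Neg a)"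

fun conj_list :: "'p ltl list \<Rightarrow> 'p ltl" where
  "conj_list [] = TT"
| "conj_list (a # as) = And a (conj_list as)"

definition conj_set :: "'p ltl set \<Rightarrow> 'p ltl" where
  "conj_set S = conj_list (SOME xs. set xs = S \<and> distinct xs)"

definition consistent_set :: "'p ltl set \<Rightarrow> 'p ltl set \<Rightarrow> bool" where
  "consistent_set E S \<longleftrightarrow> finite S \<and> consistent E (conj_set S)"

inductive_set cl' :: "'p ltl \<Rightarrow> 'p ltl set" for \<phi> :: "'p ltl" where
  base: "\<phi> \<in> cl' \<phi>"
| ev: "Until TT (Next FF) \<in> cl' \<phi>"
| neg: "Neg a \<in> cl' \<phi> \<Longrightarrow> a \<in> cl' \<phi>"
| and1: "And a b \<in> cl' \<phi> \<Longrightarrow> a \<in> cl' \<phi>"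
| and2: "And a b \<in> cl' \<phi> \<Longrightarrow> b \<in> cl' \<phi>"
| next1: "Next a \<in> cl' \<phi> \<Longrightarrow> a \<in> cl' \<phi>"
| nextneg: "Next (Neg a) \<in> cl' \<phi> \<Longrightarrow> Next a \<in> cl' \<phi>"
| until1: "Until a b \<in> cl' \<phi> \<Longrightarrow> a \<in> cl' \<phi>"
| until2: "Until a b \<in> cl' \<phi> \<Longrightarrow> b \<in> cl' \<phi>"
| until3: "Until a b \<in> cl' \<phi> \<Longrightarrow> WNext (Until a b) \<in> cl' \<phi>"

definition cl :: "'p ltl \<Rightarrow> 'p ltl set" where
  "cl \<phi> = cl' \<phi> \<union> Neg ` cl' \<phi>"

definition atom :: "'p ltl set \<Rightarrow> 'p ltl \<Rightarrow> 'p ltl set \<Rightarrow> bool" where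
  "atom E \<phi> V \<longleftrightarrow> V \<subseteq> cl \<phi> \<and> consistent_set E V \<and>
     (\<forall>W. V \<subset> W \<and> W \<subseteq> cl \<phi> \<longrightarrow> \<not> consistent_set E W)"

definition step :: "'p ltl set \<Rightarrow> 'p ltl set \<Rightarrow> 'p ltl set \<Rightarrow> bool" where
  "step E V W \<longleftrightarrow> consistent E (And (conj_set V) (WNext (conj_set W)))"

text \<open>A chain is represented by f :: nat => atom together with its length n :: enat
  (n = \<infinity> for infinite chains); only the indices i with i < n are meaningful.
  Chains are non-empty.\<close>
definition is_chain :: "'p ltl set \<Rightarrow> 'p ltl \<Rightarrow> (nat \<Rightarrow> 'p ltl set) \<Rightarrow> enat \<Rightarrow> bool" where
  "is_chain E \<phi> f n \<longleftrightarrow> n \<noteq> 0 \<and>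
     (\<forall>i. enat i < n \<longrightarrow> atom E \<phi> (f i)) \<and>
     (\<forall>i. enat (Suc i) < n \<longrightarrow> step E (f i) (f (Suc i)))"

definition acceptable :: "(nat \<Rightarrow> 'p ltl set) \<Rightarrow> enat \<Rightarrow> bool" where
  "acceptable f n \<longleftrightarrow> (\<forall>i a b. enat i < n \<longrightarrow> Until a b \<in> f i \<longrightarrow>
     (\<exists>j\<ge>i. enat j < n \<and> b \<in> f j \<and> (\<forall>k. i \<le> k \<and> k < j \<longrightarrow> a \<in> f k)))"

definition prefix_of :: "'p ltl set list \<Rightarrow> (nat \<Rightarrow> 'p ltl set) \<Rightarrow> enat \<Rightarrow> bool" where
  "prefix_of xs f n \<longleftrightarrow> enat (length xs) \<le> n \<and> (\<forall>i < length xs. f i = xs ! i)"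

end

theory Submission
  imports Defs
begin

lemma peval_Or[simp]: "peval v (Or a b) = (peval v a \<or> peval v b)"
  by (simp add: Or_def)
lemma peval_Imp[simp]: "peval v (Imp a b) = (peval v a \<longrightarrow> peval v b)"
  by (simp add: Imp_def)
lemma peval_Iff[simp]: "peval v (Iff a b) = (peval v a \<longleftrightarrow> peval v b)"
  by (auto simp add: Iff_def)
lemma peval_TT[simp]: "peval v TT"
  by (simp add: TT_def)
lemma peval_FF[simp]: "\<not> peval v FF"
  by (simp add: FF_def)
lemma peval_WNext[simp]: "peval v (WNext a) = (\<not> v (Next (Neg a)))"
  by (simp add: WNext_def)

lemma peval_conj_list: "peval v (conj_list xs) = (\<forall>x\<in>set xs. peval v x)"
  by (induction xs) auto

lemma conj_set_list: "finite S \<Longrightarrow> set (SOME xs. set xs = S \<and> distinct xs) = S"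
proof -
  assume "finite S"
  then obtain xs where "set xs = S \<and> distinct xs" using finite_distinct_list by blast
  then have "\<exists>xs. set xs = S \<and> distinct xs" by blast
  from someI_ex[OF this] show ?thesis by blast
qed

lemma peval_conj_set[simp]: "finite S \<Longrightarrow> peval v (conj_set S) = (\<forall>x\<in>S. peval v x)"
  unfolding conj_set_def by (simp add: conj_set_list peval_conj_list)

definition disj_set :: "'p ltl set \<Rightarrow> 'p ltl" where
  "disj_set S = Neg (conj_set (Neg ` S))"

lemma peval_disj_set[simp]: "finite S \<Longrightarrow> peval v (disj_set S) = (\<exists>x\<in>S. peval v x)"
  unfolding disj_set_def by simp

lemma prov_pl:
  assumes "finite H" "\<forall>h\<in>H. prov E h" "\<forall>v. (\<forall>h\<in>H. peval v h) \<longrightarrow> peval v c"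
  shows "prov E c"
  using assms
proof (induction H arbitrary: c rule: finite_induct)
  case empty
  then show ?case by (auto intro: prov.Prop simp: taut_def)
next
  case (insert h H)
  have "prov E (Imp h c)"
    by (rule insert.IH) (use insert.prems insert.hyps in auto)
  then show ?case using insert.prems prov.MP by blast
qed

lemma prov_pl1:
  assumes "prov E a" "\<forall>v. peval v a \<longrightarrow> peval v c" shows "prov E c"
  using prov_pl[of "{a}" E c] assms by auto

lemma prov_pl2:
  assumes "prov E a" "prov E b" "\<forall>v. peval v a \<longrightarrow> peval v b \<longrightarrow> peval v c" shows "prov E c"
  using prov_pl[of "{a,b}" E c] assms by auto

lemma prov_taut: "\<forall>v. peval v c \<Longrightarrow> prov E c"
  by (auto intro: prov.Prop simp: taut_def)

lemma next_mono: assumes "prov E (Imp a b)" shows "prov E (Imp (Next a) (Next b))"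
proof -
  have 1: "prov E (Next (Imp a b))" using assms by (rule prov.RT1)
  have 2: "prov E (Imp (And (Next a) (Next (Imp a b))) (Next b))" by (rule prov.T1)
  show ?thesis using 1 2 by (rule prov_pl2) simp
qed

lemma next_conj_list:
  assumes "\<forall>x\<in>set xs. prov E (Imp h (Next x))"
  shows "prov E (Imp h (Next (conj_list xs)))"
  using assms
proof (induction xs)
  case Nil
  have "prov E (Next TT)" by (rule prov.RT1, rule prov_taut) simp
  then show ?case by (rule prov_pl1) auto
next
  case (Cons x xs)
  let ?r = "conj_list xs"
  have 1: "prov E (Imp h (Next x))" using Cons by simp
  have 2: "prov E (Imp h (Next ?r))" using Cons by simp
  have 3: "prov E (Imp (And (Next ?r) (Next (Imp ?r (And x ?r)))) (Next (And x ?r)))" by (rule prov.T1)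
  have 4: "prov E (Imp (And (Next x) (Next (Imp x (Imp ?r (And x ?r))))) (Next (Imp ?r (And x ?r))))" by (rule prov.T1)
  have 5: "prov E (Next (Imp x (Imp ?r (And x ?r))))" by (rule prov.RT1, rule prov_taut) simp
  show ?case
    by (rule prov_pl[of "{Imp h (Next x), Imp h (Next ?r), Imp (And (Next ?r) (Next (Imp ?r (And x ?r)))) (Next (And x ?r)),
       Imp (And (Next x) (Next (Imp x (Imp ?r (And x ?r))))) (Next (Imp ?r (And x ?r))), Next (Imp x (Imp ?r (And x ?r)))}"])
      (use 1 2 3 4 5 in \<open>simp_all del: peval.simps add: peval.simps(1,2)\<close>)
qed

lemma next_conj_set:
  assumes "finite X" "\<forall>x\<in>X. prov E (Imp h (Next x))"
  shows "prov E (Imp h (Next (conj_set X)))"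
  unfolding conj_set_def using assms by (intro next_conj_list) (simp add: conj_set_list)

fun sf :: "'p ltl \<Rightarrow> 'p ltl set" where
  "sf (Prop p) = {Prop p}"
| "sf (Neg a) = insert (Neg a) (sf a)"
| "sf (And a b) = insert (And a b) (sf a \<union> sf b)"
| "sf (Next a) = insert (Next a) (sf a)"
| "sf (Until a b) = insert (Until a b) (sf a \<union> sf b)"

lemma finite_sf: "finite (sf a)"
  by (induction a) auto

lemma sf_self: "a \<in> sf a"
  by (cases a) auto

lemma sf_sub: "y \<in> sf x \<Longrightarrow> sf y \<subseteq> sf x"
  by (induction x) auto

definition S0 :: "'p ltl \<Rightarrow> 'p ltl set" where
  "S0 \<phi> = sf \<phi> \<union> sf (Until TT (Next FF))"

lemma S0_closed: "y \<in> S0 \<phi> \<Longrightarrow> z \<in> sf y \<Longrightarrow> z \<in> S0 \<phi>"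
  unfolding S0_def using sf_sub by blast

lemma S0_Neg: "Neg a \<in> S0 \<phi> \<Longrightarrow> a \<in> S0 \<phi>"
  using S0_closed[of "Neg a" \<phi> a] sf_self[of a] by auto
lemma S0_Next: "Next a \<in> S0 \<phi> \<Longrightarrow> a \<in> S0 \<phi>"
  using S0_closed[of "Next a" \<phi> a] sf_self[of a] by auto
lemma S0_And: "And a b \<in> S0 \<phi> \<Longrightarrow> a \<in> S0 \<phi> \<and> b \<in> S0 \<phi>"
  using S0_closed[of "And a b" \<phi> a] S0_closed[of "And a b" \<phi> b] sf_self[of a] sf_self[of b] by auto
lemma S0_Until: "Until a b \<in> S0 \<phi> \<Longrightarrow> a \<in> S0 \<phi> \<and> b \<in> S0 \<phi>"
  using S0_closed[of "Until a b" \<phi> a] S0_closed[of "Until a b" \<phi> b] sf_self[of a] sf_self[of b] by auto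

definition XX :: "'p ltl \<Rightarrow> 'p ltl set" where
  "XX \<phi> = S0 \<phi> \<union> Neg ` S0 \<phi> \<union> Next ` S0 \<phi> \<union> Neg ` Next ` S0 \<phi> \<union> Next ` Neg ` S0 \<phi>
     \<union> Neg ` Next ` Neg ` S0 \<phi>"

lemma finite_XX: "finite (XX \<phi>)"
proof -
  have "finite (S0 \<phi>)" unfolding S0_def using finite_sf by blast
  then show ?thesis unfolding XX_def by blast
qed

lemma XX_iff: "x \<in> XX \<phi> \<longleftrightarrow> (x \<in> S0 \<phi> \<or> (\<exists>y\<in>S0 \<phi>. x = Neg y \<or> x = Next y \<or> x = Neg (Next y)
   \<or> x = Next (Neg y) \<or> x = Neg (Next (Neg y))))"
  unfolding XX_def by blast

lemma cl'_XX: "x \<in> cl' \<phi> \<Longrightarrow> x \<in> XX \<phi>"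
proof (induction rule: cl'.induct)
  case base
  then show ?case unfolding XX_iff S0_def using sf_self by blast
next
  case ev
  then show ?case unfolding XX_iff S0_def using sf_self by blast
next
  case (neg a)
  then show ?case unfolding XX_iff by (auto dest: S0_Neg)
next
  case (and1 a b)
  then show ?case unfolding XX_iff by (auto dest: S0_And)
next
  case (and2 a b)
  then show ?case unfolding XX_iff by (auto dest: S0_And)
next
  case (next1 a)
  then show ?case unfolding XX_iff by (auto dest: S0_Next)
next
  case (nextneg a)
  then show ?case unfolding XX_iff by (auto dest: S0_Next S0_Neg)
next
  case (until1 a b)
  then show ?case unfolding XX_iff by (auto dest: S0_Until)
next
  case (until2 a b)
  then show ?case unfolding XX_iff by (auto dest: S0_Until)
next
  case (until3 a b)
  then show ?case unfolding XX_iff WNext_def by auto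
qed

lemma finite_cl': "finite (cl' \<phi>)"
  using finite_XX cl'_XX by (metis finite_subset subsetI)

lemma finite_cl: "finite (cl \<phi>)"
  unfolding cl_def using finite_cl' by blast

lemma atom_fin: "atom E \<phi> V \<Longrightarrow> finite V"
  unfolding atom_def consistent_set_def by blast

lemma atom_cons: "atom E \<phi> V \<Longrightarrow> \<not> prov E (Neg (conj_set V))"
  unfolding atom_def consistent_set_def consistent_def by blast

lemma atom_sub: "atom E \<phi> V \<Longrightarrow> V \<subseteq> cl \<phi>"
  unfolding atom_def by blast

lemma until_cl': "atom E \<phi> V \<Longrightarrow> Until a b \<in> V \<Longrightarrow> Until a b \<in> cl' \<phi>"
  using atom_sub unfolding cl_def by fastforce

lemma cl'_cl: "x \<in> cl' \<phi> \<Longrightarrow> x \<in> cl \<phi>"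
  unfolding cl_def by blast
lemma cl'_Neg_cl: "x \<in> cl' \<phi> \<Longrightarrow> Neg x \<in> cl \<phi>"
  unfolding cl_def by blast

lemma atom_incons:
  assumes "atom E \<phi> V" "finite H" "\<forall>h\<in>H. prov E h"
    "\<forall>v. (\<forall>h\<in>H. peval v h) \<longrightarrow> (\<forall>x\<in>V. peval v x) \<longrightarrow> False"
  shows False
proof -
  have "prov E (Neg (conj_set V))"
    using assms atom_fin[OF assms(1)] by (intro prov_pl[of H]) auto
  then show False using atom_cons[OF assms(1)] by blast
qed

lemma atoms_finite: "finite {W. atom E \<phi> W}"
proof -
  have "{W. atom E \<phi> W} \<subseteq> Pow (cl \<phi>)" using atom_sub by blast
  then show ?thesis using finite_cl by (metis finite_Pow_iff finite_subset)
qed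

lemma atom_closed:
  assumes "atom E \<phi> V" "\<psi> \<in> cl \<phi>" "finite H" "\<forall>h\<in>H. prov E h"
    "\<forall>v. (\<forall>h\<in>H. peval v h) \<longrightarrow> (\<forall>x\<in>V. peval v x) \<longrightarrow> peval v \<psi>"
  shows "\<psi> \<in> V"
proof (rule ccontr)
  assume "\<psi> \<notin> V"
  then have "V \<subset> insert \<psi> V" "insert \<psi> V \<subseteq> cl \<phi>" using assms atom_sub[OF assms(1)] by auto
  then have "\<not> consistent_set E (insert \<psi> V)" using assms(1) unfolding atom_def by blast
  moreover have "finite (insert \<psi> V)" using atom_fin[OF assms(1)] by simp
  ultimately have p: "prov E (Neg (conj_set (insert \<psi> V)))"
    unfolding consistent_set_def consistent_def by blast
  show False
    apply (rule atom_incons[OF assms(1), of "insert (Neg (conj_set (insert \<psi> V))) H"])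
    using assms p atom_fin[OF assms(1)] by auto
qed

lemma atom_max:
  assumes "atom E \<phi> V" "\<psi> \<in> cl' \<phi>" "\<psi> \<notin> V"
  shows "Neg \<psi> \<in> V"
proof (rule ccontr)
  assume a: "Neg \<psi> \<notin> V"
  have "V \<subset> insert \<psi> V" "insert \<psi> V \<subseteq> cl \<phi>" using assms atom_sub cl'_cl by auto
  then have "\<not> consistent_set E (insert \<psi> V)" using assms(1) unfolding atom_def by blast
  moreover have "finite (insert \<psi> V)" using atom_fin[OF assms(1)] by simp
  ultimately have p: "prov E (Neg (conj_set (insert \<psi> V)))"
    unfolding consistent_set_def consistent_def by blast
  have "V \<subset> insert (Neg \<psi>) V" "insert (Neg \<psi>) V \<subseteq> cl \<phi>" using assms a atom_sub cl'_Neg_cl by auto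
  then have "\<not> consistent_set E (insert (Neg \<psi>) V)" using assms(1) unfolding atom_def by blast
  moreover have "finite (insert (Neg \<psi>) V)" using atom_fin[OF assms(1)] by simp
  ultimately have q: "prov E (Neg (conj_set (insert (Neg \<psi>) V)))"
    unfolding consistent_set_def consistent_def by blast
  show False
    apply (rule atom_incons[OF assms(1), of "{Neg (conj_set (insert \<psi> V)), Neg (conj_set (insert (Neg \<psi>) V))}"])
    using p q atom_fin[OF assms(1)] by auto
qed

lemma atom_Neg_notin: "atom E \<phi> V \<Longrightarrow> Neg \<psi> \<in> V \<Longrightarrow> \<psi> \<notin> V"
  by (rule notI, rule atom_incons[of E \<phi> V "{}"]) (auto, metis peval.simps(1))

lemma nostep:
  assumes "atom E \<phi> V" "atom E \<phi> W" "finite H" "\<forall>h\<in>H. prov E h"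
    "\<forall>v. (\<forall>h\<in>H. peval v h) \<longrightarrow> (\<forall>x\<in>V. peval v x) \<longrightarrow> v (Next (Neg (conj_set W)))"
  shows "\<not> step E V W"
proof -
  have "prov E (Neg (And (conj_set V) (WNext (conj_set W))))"
    using assms atom_fin[OF assms(1)] by (intro prov_pl[of H]) auto
  then show ?thesis unfolding step_def consistent_def by blast
qed

definition Sig :: "'p ltl \<Rightarrow> 'p ltl set \<Rightarrow> 'p ltl set" where
  "Sig \<phi> T = T \<union> Neg ` (cl' \<phi> - T)"

lemma sig_atom:
  assumes "T \<subseteq> cl' \<phi>" "consistent_set E (Sig \<phi> T)"
  shows "atom E \<phi> (Sig \<phi> T)"
  unfolding atom_def
proof (intro conjI allI impI)
  show "Sig \<phi> T \<subseteq> cl \<phi>" using assms unfolding Sig_def cl_def by blast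
  show "consistent_set E (Sig \<phi> T)" by fact
  fix W assume W: "Sig \<phi> T \<subset> W \<and> W \<subseteq> cl \<phi>"
  then obtain x where x: "x \<in> W" "x \<notin> Sig \<phi> T" by blast
  have "\<exists>z. z \<in> W \<and> Neg z \<in> W"
  proof (cases "x \<in> cl' \<phi>")
    case True
    then have "Neg x \<in> W" using x W unfolding Sig_def by blast
    then show ?thesis using x by blast
  next
    case False
    then obtain y where y: "x = Neg y" "y \<in> cl' \<phi>" using x W unfolding cl_def by blast
    then have "y \<in> T" using x unfolding Sig_def by blast
    then have "y \<in> W" using W unfolding Sig_def by blast
    then show ?thesis using x y by blast
  qed
  then obtain z where z: "z \<in> W" "Neg z \<in> W" by blast
  have fW: "finite W" using W finite_cl finite_subset by blast
  have "prov E (Neg (conj_set W))"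
    apply (rule prov_taut) using z fW by (auto, metis peval.simps(1))
  then show "\<not> consistent_set E W" unfolding consistent_set_def consistent_def by blast
qed

lemma sig_finite: "T \<subseteq> cl' \<phi> \<Longrightarrow> finite (Sig \<phi> T)"
  unfolding Sig_def using finite_cl' finite_subset by blast

lemma A3: "prov E (disj_set (conj_set ` {W. atom E \<phi> W}))"
proof -
  let ?I = "{T. T \<subseteq> cl' \<phi> \<and> \<not> consistent_set E (Sig \<phi> T)}"
  let ?H = "(\<lambda>T. Neg (conj_set (Sig \<phi> T))) ` ?I"
  have fI: "finite ?I" using finite_cl' by (metis (no_types, lifting) Collect_mono Pow_def finite_Pow_iff rev_finite_subset)
  have pH: "\<forall>h\<in>?H. prov E h"
    using sig_finite unfolding consistent_set_def consistent_def by blast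
  have fA: "finite (conj_set ` {W. atom E \<phi> W})" using atoms_finite by blast
  show ?thesis
  proof (rule prov_pl[of ?H])
    show "finite ?H" using fI by blast
    show "\<forall>h\<in>?H. prov E h" by (rule pH)
    show "\<forall>v. (\<forall>h\<in>?H. peval v h) \<longrightarrow> peval v (disj_set (conj_set ` {W. atom E \<phi> W}))"
    proof (intro allI impI)
      fix v assume hv: "\<forall>h\<in>?H. peval v h"
      define T where "T = {x \<in> cl' \<phi>. peval v x}"
      have Tsub: "T \<subseteq> cl' \<phi>" unfolding T_def by blast
      have allT: "\<forall>x\<in>Sig \<phi> T. peval v x" unfolding Sig_def T_def by auto
      then have pc: "peval v (conj_set (Sig \<phi> T))" using sig_finite[OF Tsub] by simp
      have "consistent_set E (Sig \<phi> T)"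
      proof (rule ccontr)
        assume "\<not> consistent_set E (Sig \<phi> T)"
        then have "Neg (conj_set (Sig \<phi> T)) \<in> ?H" using Tsub by blast
        then show False using hv pc by auto
      qed
      then have "atom E \<phi> (Sig \<phi> T)" using sig_atom[OF Tsub] by blast
      then show "peval v (disj_set (conj_set ` {W. atom E \<phi> W}))"
        using fA pc by auto
    qed
  qed
qed

fun rb :: "'p ltl set \<Rightarrow> 'p ltl \<Rightarrow> 'p ltl \<Rightarrow> nat \<Rightarrow> 'p ltl set \<Rightarrow> bool" where
  "rb E \<phi> b 0 W = (b \<in> W)"
| "rb E \<phi> b (Suc n) W = (\<exists>W'. atom E \<phi> W' \<and> step E W W' \<and> rb E \<phi> b n W')"

lemma nostep_until:
  assumes "atom E \<phi> W" "atom E \<phi> W'" "Until a b \<in> W" "b \<notin> W" "Neg (Until a b) \<in> W'"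
  shows "\<not> step E W W'"
proof -
  let ?U = "Until a b" and ?W' = "conj_set W'"
  have nb: "Neg b \<in> W" using assms until_cl' cl'.until2 atom_max by metis
  have h1: "prov E (Iff ?U (Or b (And a (WNext ?U))))" by (rule prov.T2')
  have h2: "prov E (Iff (Next ?U) (Or (Next FF) (WNext ?U)))" by (rule prov.T3')
  have h3: "prov E (Imp (And (Next ?U) (Next (Imp ?U (Neg ?W')))) (Next (Neg ?W')))" by (rule prov.T1)
  have h4: "prov E (Next (Imp ?U (Neg ?W')))"
    apply (rule prov.RT1, rule prov_taut)
    using assms(5) atom_fin[OF assms(2)] by (auto, metis peval.simps(1,5))
  show ?thesis
  proof (rule nostep[OF assms(1,2), of "{Iff ?U (Or b (And a (WNext ?U))), Iff (Next ?U) (Or (Next FF) (WNext ?U)),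
      Imp (And (Next ?U) (Next (Imp ?U (Neg ?W')))) (Next (Neg ?W')), Next (Imp ?U (Neg ?W'))}"])
    show "\<forall>v. (\<forall>h\<in>{Iff ?U (Or b (And a (WNext ?U))), Iff (Next ?U) (Or (Next FF) (WNext ?U)),
      Imp (And (Next ?U) (Next (Imp ?U (Neg ?W')))) (Next (Neg ?W')), Next (Imp ?U (Neg ?W'))}. peval v h)
      \<longrightarrow> (\<forall>x\<in>W. peval v x) \<longrightarrow> v (Next (Neg ?W'))"
    proof (intro allI impI)
      fix v
      assume H: "\<forall>h\<in>{Iff ?U (Or b (And a (WNext ?U))), Iff (Next ?U) (Or (Next FF) (WNext ?U)),
      Imp (And (Next ?U) (Next (Imp ?U (Neg ?W')))) (Next (Neg ?W')), Next (Imp ?U (Neg ?W'))}. peval v h"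
        and V: "\<forall>x\<in>W. peval v x"
      have "v ?U" using V assms(3) by fastforce
      moreover have "\<not> peval v b" using V nb by fastforce
      ultimately show "v (Next (Neg ?W'))" using H by simp
    qed
  qed (use h1 h2 h3 h4 in auto)
qed

lemma prop1:
  assumes "atom E \<phi> W" "atom E \<phi> W'" "step E W W'" "Until a b \<in> W" "b \<notin> W"
  shows "Until a b \<in> W'"
  using assms nostep_until atom_max until_cl' by metis

lemma until_a:
  assumes "atom E \<phi> W" "Until a b \<in> W" "b \<notin> W"
  shows "a \<in> W"
proof -
  have nb: "Neg b \<in> W" using assms until_cl' cl'.until2 atom_max by metis
  have acl: "a \<in> cl \<phi>" using assms until_cl' cl'.until1 cl'_cl by metis
  show ?thesis
  proof (rule atom_closed[OF assms(1) acl, of "{Iff (Until a b) (Or b (And a (WNext (Until a b))))}"])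
    show "\<forall>v. (\<forall>h\<in>{Iff (Until a b) (Or b (And a (WNext (Until a b))))}. peval v h) \<longrightarrow>
        (\<forall>x\<in>W. peval v x) \<longrightarrow> peval v a"
    proof (intro allI impI)
      fix v assume H: "\<forall>h\<in>{Iff (Until a b) (Or b (And a (WNext (Until a b))))}. peval v h"
        and V: "\<forall>x\<in>W. peval v x"
      have "v (Until a b)" using V assms(2) by fastforce
      moreover have "\<not> peval v b" using V nb by fastforce
      ultimately show "peval v a" using H by simp
    qed
  qed (auto intro: prov.T2')
qed

lemma nostep_imp:
  assumes "\<not> step E W W'"
  shows "prov E (Imp (conj_set W) (Next (Neg (conj_set W'))))"
proof -
  have "prov E (Neg (And (conj_set W) (WNext (conj_set W'))))"
    using assms unfolding step_def consistent_def by blast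
  then show ?thesis by (rule prov_pl1) simp
qed

lemma lemmaL:
  assumes V: "atom E \<phi> V" "Until a b \<in> V"
  shows "\<exists>n. rb E \<phi> b n V"
proof (rule ccontr)
  assume nV: "\<not> (\<exists>n. rb E \<phi> b n V)"
  define A where "A = {W. atom E \<phi> W}"
  define S where "S = {W. atom E \<phi> W \<and> Until a b \<in> W \<and> \<not> (\<exists>n. rb E \<phi> b n W)}"
  define c where "c = disj_set (conj_set ` S)"
  have fA: "finite A" unfolding A_def by (rule atoms_finite)
  have SA: "S \<subseteq> A" unfolding S_def A_def by blast
  have fS: "finite S" using fA SA finite_subset by blast
  have VS: "V \<in> S" unfolding S_def using V nV by blast
  have bcl: "b \<in> cl' \<phi>" using V until_cl' cl'.until2 by metis
  have nb: "Neg b \<in> W" if "W \<in> S" for W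
  proof -
    have "b \<notin> W" using that unfolding S_def using rb.simps(1) by blast
    then show ?thesis using that atom_max bcl unfolding S_def by blast
  qed
  have ns: "\<not> step E W W'" if W: "W \<in> S" and W': "W' \<in> A - S" for W W'
  proof
    assume st: "step E W W'"
    have aW: "atom E \<phi> W" "Until a b \<in> W" "\<forall>n. \<not> rb E \<phi> b n W" using W unfolding S_def by auto
    have aW': "atom E \<phi> W'" using W' unfolding A_def by blast
    show False
    proof (cases "Until a b \<in> W'")
      case True
      then obtain n where "rb E \<phi> b n W'" using W' aW' unfolding S_def by blast
      then have "rb E \<phi> b (Suc n) W" using aW' st by auto
      then show False using aW by blast
    next
      case False
      then have "Neg (Until a b) \<in> W'" using aW' atom_max until_cl' aW by metis
      moreover have "b \<notin> W" using aW(3) rb.simps(1) by blast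
      ultimately show False using nostep_until[OF aW(1) aW' aW(2)] st by blast
    qed
  qed
  have nc: "prov E (Imp (conj_set W) (Next c))" if W: "W \<in> S" for W
  proof -
    let ?X = "Neg ` conj_set ` (A - S)"
    have "prov E (Imp (conj_set W) (Next (conj_set ?X)))"
      using fA ns[OF W] nostep_imp by (intro next_conj_set) auto
    moreover have "prov E (Imp (conj_set ?X) c)"
    proof (rule prov_pl1[OF A3[of E \<phi>]])
      show "\<forall>v. peval v (disj_set (conj_set ` {W. atom E \<phi> W})) \<longrightarrow> peval v (Imp (conj_set ?X) c)"
      proof (intro allI impI)
        fix v assume "peval v (disj_set (conj_set ` {W. atom E \<phi> W}))"
        then obtain W0 where W0: "W0 \<in> A" "peval v (conj_set W0)" using fA unfolding A_def by auto
        show "peval v (Imp (conj_set ?X) c)"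
        proof (cases "W0 \<in> S")
          case True
          then show ?thesis unfolding c_def using fS W0 by auto
        next
          case False
          then have "\<not> peval v (conj_set ?X)" using W0 fA by auto
          then show ?thesis by simp
        qed
      qed
    qed
    then have "prov E (Imp (Next (conj_set ?X)) (Next c))" by (rule next_mono)
    ultimately show ?thesis by (rule prov_pl2) simp
  qed
  have "prov E (Imp c (And (Neg b) (Next c)))"
  proof (rule prov_pl[of "(\<lambda>W. Imp (conj_set W) (Next c)) ` S"])
    show "finite ((\<lambda>W. Imp (conj_set W) (Next c)) ` S)" using fS by blast
    show "\<forall>h\<in>(\<lambda>W. Imp (conj_set W) (Next c)) ` S. prov E h" using nc by blast
    show "\<forall>v. (\<forall>h\<in>(\<lambda>W. Imp (conj_set W) (Next c)) ` S. peval v h) \<longrightarrow>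
        peval v (Imp c (And (Neg b) (Next c)))"
    proof (intro allI impI)
      fix v assume H: "\<forall>h\<in>(\<lambda>W. Imp (conj_set W) (Next c)) ` S. peval v h"
      show "peval v (Imp c (And (Neg b) (Next c)))"
        unfolding peval_Imp
      proof
        assume "peval v c"
        then obtain W where W: "W \<in> S" "peval v (conj_set W)" unfolding c_def using fS by auto
        have fW: "finite W" using W unfolding S_def using atom_fin by blast
        have "\<not> peval v b" using W nb[OF W(1)] fW by fastforce
        moreover have "v (Next c)" using H W by fastforce
        ultimately show "peval v (And (Neg b) (Next c))" by simp
      qed
    qed
  qed
  then have r: "prov E (Imp c (Neg (Until a b)))" by (rule prov.RT2)
  show False
  proof (rule atom_incons[OF V(1), of "{Imp c (Neg (Until a b))}"])
    show "\<forall>v. (\<forall>h\<in>{Imp c (Neg (Until a b))}. peval v h) \<longrightarrow> (\<forall>x\<in>V. peval v x) \<longrightarrow> False"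
    proof (intro allI impI)
      fix v assume H: "\<forall>h\<in>{Imp c (Neg (Until a b))}. peval v h" and VV: "\<forall>x\<in>V. peval v x"
      have "peval v (conj_set V)" using VV atom_fin[OF V(1)] by simp
      then have "peval v c" unfolding c_def using VS fS by auto
      then have "\<not> v (Until a b)" using H by simp
      moreover have "v (Until a b)" using VV V(2) by fastforce
      ultimately show False by blast
    qed
  qed (use r in auto)
qed

lemma prop_chain:
  assumes ch: "is_chain E \<phi> f n" and u: "Until a b \<in> f i" and k: "enat k < n" "i \<le> k"
    and nb: "\<forall>l. i \<le> l \<and> l < k \<longrightarrow> b \<notin> f l"
  shows "Until a b \<in> f k"
  using k nb
proof (induction k)
  case 0
  then show ?case using u by simp
next
  case (Suc k)
  show ?case
  proof (cases "i = Suc k")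
    case True
    then show ?thesis using u by simp
  next
    case False
    then have ik: "i \<le> k" using Suc by simp
    have kn: "enat k < n" using Suc.prems(1) by (meson Suc_ile_eq order_less_imp_le)
    have IH: "Until a b \<in> f k" using Suc.IH[OF kn ik] Suc.prems by simp
    have "b \<notin> f k" using Suc.prems ik by simp
    moreover have "atom E \<phi> (f k)" "atom E \<phi> (f (Suc k))" "step E (f k) (f (Suc k))"
      using ch kn Suc.prems(1) unfolding is_chain_def by auto
    ultimately show ?thesis using prop1 IH by blast
  qed
qed

lemma acc_red:
  assumes ch: "is_chain E \<phi> f n"
    and ev: "\<forall>i a b. enat i < n \<longrightarrow> Until a b \<in> f i \<longrightarrow> (\<exists>j\<ge>i. enat j < n \<and> b \<in> f j)"
  shows "acceptable f n"
  unfolding acceptable_def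
proof (intro allI impI)
  fix i a b assume i: "enat i < n" and u: "Until a b \<in> f i"
  let ?Q = "\<lambda>j. i \<le> j \<and> enat j < n \<and> b \<in> f j"
  obtain j0 where "?Q j0" using ev i u by blast
  define j where "j = (LEAST j. ?Q j)"
  have Qj: "?Q j" unfolding j_def by (rule LeastI, fact)
  have nb: "\<forall>l. i \<le> l \<and> l < j \<longrightarrow> b \<notin> f l"
  proof (intro allI impI)
    fix l assume l: "i \<le> l \<and> l < j"
    then have "enat l < n" using Qj by (meson enat_ord_simps(2) less_trans)
    then show "b \<notin> f l" using l not_less_Least[of l ?Q] unfolding j_def by blast
  qed
  have "a \<in> f k" if k: "i \<le> k" "k < j" for k
  proof -
    have kn: "enat k < n" using Qj k by (meson enat_ord_simps(2) less_trans)
    have "Until a b \<in> f k" using prop_chain[OF ch u kn k(1)] nb k by auto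
    moreover have "atom E \<phi> (f k)" using ch kn unfolding is_chain_def by auto
    ultimately show ?thesis using until_a nb k by blast
  qed
  then show "\<exists>j\<ge>i. enat j < n \<and> b \<in> f j \<and> (\<forall>k. i \<le> k \<and> k < j \<longrightarrow> a \<in> f k)"
    using Qj by blast
qed

lemma rb_path:
  "rb E \<phi> b n W \<Longrightarrow> atom E \<phi> W \<Longrightarrow> \<exists>p. p 0 = W \<and> b \<in> p n \<and> (\<forall>i\<le>n. atom E \<phi> (p i))
     \<and> (\<forall>i<n. step E (p i) (p (Suc i)))"
proof (induction n arbitrary: W)
  case 0
  then show ?case by (intro exI[of _ "\<lambda>_. W"]) auto
next
  case (Suc n)
  then obtain W' where W': "atom E \<phi> W'" "step E W W'" "rb E \<phi> b n W'" by auto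
  then obtain p where p: "p 0 = W'" "b \<in> p n" "\<forall>i\<le>n. atom E \<phi> (p i)" "\<forall>i<n. step E (p i) (p (Suc i))"
    using Suc.IH by blast
  show ?case
  proof (intro exI[of _ "\<lambda>i. if i = 0 then W else p (i - 1)"] conjI allI impI)
    fix i assume "i \<le> Suc n" then show "atom E \<phi> (if i = 0 then W else p (i - 1))"
      using Suc.prems p by auto
  next
    fix i assume "i < Suc n" then show "step E (if i = 0 then W else p (i - 1)) (if Suc i = 0 then W else p (Suc i - 1))"
      using W' p by (cases i) auto
  qed (use p in auto)
qed

lemma nff_no_pending:
  assumes L: "atom E \<phi> L" "Next FF \<in> L" "Until a b \<in> L"
  shows "b \<in> L"
proof (rule ccontr)
  assume "b \<notin> L"
  then have nb: "Neg b \<in> L" using L until_cl' cl'.until2 atom_max by metis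
  let ?U = "Until a b"
  have h1: "prov E (Iff ?U (Or b (And a (WNext ?U))))" by (rule prov.T2')
  have h2: "prov E (Imp (And (Next FF) (Next (Imp FF (Neg ?U)))) (Next (Neg ?U)))" by (rule prov.T1)
  have h3: "prov E (Next (Imp FF (Neg ?U)))" by (rule prov.RT1, rule prov_taut) simp
  show False
  proof (rule atom_incons[OF L(1), of "{Iff ?U (Or b (And a (WNext ?U))), Imp (And (Next FF) (Next (Imp FF (Neg ?U)))) (Next (Neg ?U)), Next (Imp FF (Neg ?U))}"])
    show "\<forall>v. (\<forall>h\<in>{Iff ?U (Or b (And a (WNext ?U))), Imp (And (Next FF) (Next (Imp FF (Neg ?U)))) (Next (Neg ?U)), Next (Imp FF (Neg ?U))}. peval v h)
       \<longrightarrow> (\<forall>x\<in>L. peval v x) \<longrightarrow> False"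
    proof (intro allI impI)
      fix v assume H: "\<forall>h\<in>{Iff ?U (Or b (And a (WNext ?U))), Imp (And (Next FF) (Next (Imp FF (Neg ?U)))) (Next (Neg ?U)), Next (Imp FF (Neg ?U))}. peval v h"
        and LL: "\<forall>x\<in>L. peval v x"
      have "v ?U" using LL L(3) by fastforce
      moreover have "\<not> peval v b" using LL nb by fastforce
      moreover have "v (Next FF)" using LL L(2) by fastforce
      ultimately show False using H by auto
    qed
  qed (use h1 h2 h3 in auto)
qed

lemma chain_nth_last:
  assumes "is_chain E \<phi> (nth xs) (enat (length xs))"
  shows "xs \<noteq> []" "atom E \<phi> (last xs)" "last xs = xs ! (length xs - 1)"
proof -
  show ne: "xs \<noteq> []" using assms unfolding is_chain_def by (auto simp: zero_enat_def)
  show "last xs = xs ! (length xs - 1)" using ne by (simp add: last_conv_nth)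
  then show "atom E \<phi> (last xs)" using assms ne unfolding is_chain_def by auto
qed

lemma fin_ext:
  assumes ch: "is_chain E \<phi> (nth xs) (enat (length xs))" and ev: "Until TT (Next FF) \<in> last xs"
  shows "\<exists>f m. is_chain E \<phi> f (enat m) \<and> acceptable f (enat m) \<and> prefix_of xs f (enat m)"
proof -
  note cl = chain_nth_last[OF ch]
  let ?len = "length xs"
  from lemmaL[OF cl(2) ev] obtain n where n: "rb E \<phi> (Next FF) n (last xs)" ..
  from rb_path[OF n cl(2)] obtain p where p: "p 0 = last xs" "Next FF \<in> p n" "\<forall>i\<le>n. atom E \<phi> (p i)"
     "\<forall>i<n. step E (p i) (p (Suc i))" by blast
  define g where "g i = (if i < ?len then xs ! i else p (i - (?len - 1)))" for i
  have gp: "g i = p (i - (?len - 1))" if "i \<ge> ?len - 1" for i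
    using that p(1) cl unfolding g_def by (cases "i = ?len - 1") auto
  have gx: "g i = xs ! i" if "i < ?len" for i using that unfolding g_def by simp
  define m where "m = ?len + n"
  have lenpos: "?len > 0" using cl by simp
  have chg: "is_chain E \<phi> g (enat m)"
    unfolding is_chain_def
  proof (intro conjI allI impI)
    show "enat m \<noteq> 0" using lenpos unfolding m_def by (simp add: zero_enat_def)
  next
    fix i assume "enat i < enat m"
    then have i: "i < m" by simp
    show "atom E \<phi> (g i)"
    proof (cases "i < ?len")
      case True
      then show ?thesis using ch gx unfolding is_chain_def by auto
    next
      case False
      then show ?thesis using gp[of i] p(3) i unfolding m_def by auto
    qed
  next
    fix i assume "enat (Suc i) < enat m"
    then have i: "Suc i < m" by simp
    show "step E (g i) (g (Suc i))"
    proof (cases "Suc i < ?len")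
      case True
      then show ?thesis using ch gx unfolding is_chain_def by auto
    next
      case False
      then have ge: "?len - 1 \<le> i" by simp
      have e: "Suc i - (?len - 1) = Suc (i - (?len - 1))" using ge by arith
      have "g i = p (i - (?len - 1))" "g (Suc i) = p (Suc (i - (?len - 1)))"
        using gp[of i] gp[of "Suc i"] ge e by auto
      then show ?thesis using p(4) i False unfolding m_def by auto
    qed
  qed
  have last: "Next FF \<in> g (m - 1)" using gp[of "m - 1"] p(2) lenpos unfolding m_def by auto
  have acc: "acceptable g (enat m)"
  proof (rule acc_red[OF chg], intro allI impI)
    fix i a b assume i: "enat i < enat m" and u: "Until a b \<in> g i"
    show "\<exists>j\<ge>i. enat j < enat m \<and> b \<in> g j"
    proof (rule ccontr)
      assume "\<not> (\<exists>j\<ge>i. enat j < enat m \<and> b \<in> g j)"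
      then have nb: "\<forall>l. i \<le> l \<and> l < m - 1 \<longrightarrow> b \<notin> g l" and nbm: "b \<notin> g (m - 1)"
        using i by auto
      have "Until a b \<in> g (m - 1)"
        using prop_chain[OF chg u, of "m - 1"] nb i lenpos unfolding m_def by auto
      moreover have "atom E \<phi> (g (m - 1))" using chg lenpos unfolding is_chain_def m_def by auto
      ultimately show False using nff_no_pending last nbm by blast
    qed
  qed
  have "prefix_of xs g (enat m)" unfolding prefix_of_def m_def using gx by auto
  then show ?thesis using chg acc by blast
qed

lemma has_succ:
  assumes W: "atom E \<phi> W" and nf: "prov E (Imp (conj_set W) (Neg (Next FF)))"
  shows "\<exists>W'. atom E \<phi> W' \<and> step E W W'"
proof (rule ccontr)
  assume "\<not> (\<exists>W'. atom E \<phi> W' \<and> step E W W')"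
  then have ns: "\<forall>W'\<in>{W. atom E \<phi> W}. \<not> step E W W'" by blast
  let ?A = "{W. atom E \<phi> W}"
  let ?X = "Neg ` conj_set ` ?A"
  have fA: "finite ?A" by (rule atoms_finite)
  have 1: "prov E (Imp (conj_set W) (Next (conj_set ?X)))"
    using fA ns nostep_imp by (intro next_conj_set) auto
  have "prov E (Imp (conj_set ?X) FF)"
  proof (rule prov_pl1[OF A3[of E \<phi>]])
    show "\<forall>v. peval v (disj_set (conj_set ` ?A)) \<longrightarrow> peval v (Imp (conj_set ?X) FF)"
      using fA by auto
  qed
  then have 2: "prov E (Imp (Next (conj_set ?X)) (Next FF))" by (rule next_mono)
  show False
  proof (rule atom_incons[OF W, of "{Imp (conj_set W) (Next (conj_set ?X)), Imp (Next (conj_set ?X)) (Next FF),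
      Imp (conj_set W) (Neg (Next FF))}"])
    show "\<forall>v. (\<forall>h\<in>{Imp (conj_set W) (Next (conj_set ?X)), Imp (Next (conj_set ?X)) (Next FF),
      Imp (conj_set W) (Neg (Next FF))}. peval v h) \<longrightarrow> (\<forall>x\<in>W. peval v x) \<longrightarrow> False"
      using atom_fin[OF W] by auto
  qed (use 1 2 nf in auto)
qed

lemma neg_until_pres:
  assumes W: "atom E \<phi> W" "atom E \<phi> W'" "step E W W'" "Neg (Until a b) \<in> W" "a \<in> W"
  shows "Neg (Until a b) \<in> W'"
proof (rule ccontr)
  assume nin: "Neg (Until a b) \<notin> W'"
  let ?U = "Until a b" and ?W' = "conj_set W'"
  have "Neg ?U \<in> cl \<phi>" using W atom_sub by blast
  then have "?U \<in> cl' \<phi>" unfolding cl_def using cl'.neg by blast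
  then have uW': "?U \<in> W'" using nin atom_max W(2) by blast
  have h1: "prov E (Iff ?U (Or b (And a (WNext ?U))))" by (rule prov.T2')
  have h2: "prov E (Imp (And (Next (Neg ?U)) (Next (Imp (Neg ?U) (Neg ?W')))) (Next (Neg ?W')))" by (rule prov.T1)
  have h3: "prov E (Next (Imp (Neg ?U) (Neg ?W')))"
    apply (rule prov.RT1, rule prov_taut)
    using uW' atom_fin[OF W(2)] by (auto, metis peval.simps(5))
  have "\<not> step E W W'"
  proof (rule nostep[OF W(1,2), of "{Iff ?U (Or b (And a (WNext ?U))), Imp (And (Next (Neg ?U)) (Next (Imp (Neg ?U) (Neg ?W')))) (Next (Neg ?W')),
      Next (Imp (Neg ?U) (Neg ?W'))}"])
    show "\<forall>v. (\<forall>h\<in>{Iff ?U (Or b (And a (WNext ?U))), Imp (And (Next (Neg ?U)) (Next (Imp (Neg ?U) (Neg ?W')))) (Next (Neg ?W')),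
      Next (Imp (Neg ?U) (Neg ?W'))}. peval v h) \<longrightarrow> (\<forall>x\<in>W. peval v x) \<longrightarrow> v (Next (Neg ?W'))"
    proof (intro allI impI)
      fix v assume H: "\<forall>h\<in>{Iff ?U (Or b (And a (WNext ?U))), Imp (And (Next (Neg ?U)) (Next (Imp (Neg ?U) (Neg ?W')))) (Next (Neg ?W')),
      Next (Imp (Neg ?U) (Neg ?W'))}. peval v h" and V: "\<forall>x\<in>W. peval v x"
      have "\<not> v ?U" using V W(4) by fastforce
      moreover have "peval v a" using V W(5) by blast
      ultimately show "v (Next (Neg ?W'))" using H by auto
    qed
  qed (use h1 h2 h3 in auto)
  then show False using W(3) by blast
qed

fun rhs :: "'p ltl \<Rightarrow> 'p ltl" where
  "rhs (Until a b) = b"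
| "rhs x = x"

lemma inf_core:
  assumes V0: "atom E \<phi> V0" "P V0"
    and clo: "\<And>W W'. atom E \<phi> W \<Longrightarrow> atom E \<phi> W' \<Longrightarrow> step E W W' \<Longrightarrow> P W \<Longrightarrow> P W'"
    and suc: "\<And>W. atom E \<phi> W \<Longrightarrow> P W \<Longrightarrow> \<exists>W'. atom E \<phi> W' \<and> step E W W'"
  shows "\<exists>f. f 0 = V0 \<and> is_chain E \<phi> f \<infinity> \<and> (\<forall>i a b. Until a b \<in> f i \<longrightarrow> (\<exists>j\<ge>i. b \<in> f j))"
proof -
  define U where "U = {u \<in> cl' \<phi>. \<exists>a b. u = Until a b}"
  have fU: "finite U" unfolding U_def using finite_cl'[of \<phi>] by (rule finite_subset[rotated]) blast
  define ul where "ul = (SOME l. set l = U)"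
  have "\<exists>l. set l = U" using fU finite_list by blast
  then have ul: "set ul = U" unfolding ul_def by (rule someI_ex)
  define N where "N = length ul"
  have "Until TT (Next FF) \<in> U" unfolding U_def using cl'.ev by blast
  then have Npos: "N > 0" unfolding N_def using ul by (cases ul) auto
  define dist where "dist W b = (LEAST n. rb E \<phi> b n W)" for W b
  define pend where "pend s = (ul ! snd s \<in> fst s \<and> rhs (ul ! snd s) \<notin> fst s)" for s :: "'a ltl set \<times> nat"
  define nx where "nx s = (if pend s then
      (SOME W'. atom E \<phi> W' \<and> step E (fst s) W' \<and> P W' \<and> rb E \<phi> (rhs (ul ! snd s)) (dist (fst s) (rhs (ul ! snd s)) - 1) W', snd s)
    else (SOME W'. atom E \<phi> W' \<and> step E (fst s) W' \<and> P W', Suc (snd s) mod N))" for s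
  define Inv where "Inv s = (atom E \<phi> (fst s) \<and> P (fst s) \<and> snd s < N)" for s :: "'a ltl set \<times> nat"
  have nx_ok: "Inv (nx s) \<and> step E (fst s) (fst (nx s)) \<and>
      (pend s \<longrightarrow> snd (nx s) = snd s \<and> dist (fst (nx s)) (rhs (ul ! snd s)) < dist (fst s) (rhs (ul ! snd s))) \<and>
      (\<not> pend s \<longrightarrow> snd (nx s) = Suc (snd s) mod N)" if I: "Inv s" for s
  proof (cases "pend s")
    case True
    let ?W = "fst s" and ?k = "snd s"
    have "ul ! ?k \<in> U" using I ul unfolding Inv_def N_def by auto
    then obtain a b where ab: "ul ! ?k = Until a b" unfolding U_def by blast
    have uW: "Until a b \<in> ?W" "b \<notin> ?W" using True ab unfolding pend_def by auto
    have aW: "atom E \<phi> ?W" "P ?W" using I unfolding Inv_def by auto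
    obtain n where "rb E \<phi> b n ?W" using lemmaL[OF aW(1) uW(1)] by blast
    then have rd: "rb E \<phi> b (dist ?W b) ?W" unfolding dist_def by (rule LeastI)
    have "dist ?W b \<noteq> 0" using rd uW(2) by (cases "dist ?W b") auto
    then obtain d where d: "dist ?W b = Suc d" using not0_implies_Suc by blast
    then obtain W' where W': "atom E \<phi> W'" "step E ?W W'" "rb E \<phi> b d W'" using rd by auto
    have "P W'" using clo[OF aW(1) W'(1,2) aW(2)] .
    then have ex: "\<exists>W'. atom E \<phi> W' \<and> step E ?W W' \<and> P W' \<and> rb E \<phi> (rhs (ul ! ?k)) (dist ?W (rhs (ul ! ?k)) - 1) W'"
      using W' d ab by auto
    have nxs: "nx s = (SOME W'. atom E \<phi> W' \<and> step E ?W W' \<and> P W' \<and> rb E \<phi> (rhs (ul ! ?k)) (dist ?W (rhs (ul ! ?k)) - 1) W', ?k)"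
      unfolding nx_def using True by simp
    have sp: "atom E \<phi> (fst (nx s)) \<and> step E ?W (fst (nx s)) \<and> P (fst (nx s)) \<and> rb E \<phi> b d (fst (nx s))"
      using someI_ex[OF ex] nxs ab d by simp
    then have "dist (fst (nx s)) b \<le> d" unfolding dist_def by (meson Least_le)
    then have "dist (fst (nx s)) b < dist ?W b" using d by simp
    then show ?thesis using sp nxs I ab True unfolding Inv_def by simp
  next
    case False
    let ?W = "fst s" and ?k = "snd s"
    have aW: "atom E \<phi> ?W" "P ?W" using I unfolding Inv_def by auto
    obtain W' where W': "atom E \<phi> W'" "step E ?W W'" using suc[OF aW] by blast
    have "P W'" using clo[OF aW(1) W'(1,2) aW(2)] .
    then have ex: "\<exists>W'. atom E \<phi> W' \<and> step E ?W W' \<and> P W'" using W' by blast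
    have nxs: "nx s = (SOME W'. atom E \<phi> W' \<and> step E ?W W' \<and> P W', Suc ?k mod N)"
      unfolding nx_def using False by simp
    show ?thesis using someI_ex[OF ex] nxs False Npos unfolding Inv_def by simp
  qed
  define st where "st i = (nx ^^ i) (V0, 0)" for i
  have st0: "st 0 = (V0, 0)" unfolding st_def by simp
  have stS: "st (Suc i) = nx (st i)" for i unfolding st_def by simp
  have inv: "Inv (st i)" for i
  proof (induction i)
    case 0
    then show ?case using st0 V0 Npos unfolding Inv_def by simp
  next
    case (Suc i)
    then show ?case using nx_ok stS by metis
  qed
  define f where "f i = fst (st i)" for i
  have chf: "is_chain E \<phi> f \<infinity>"
    unfolding is_chain_def f_def using inv nx_ok stS unfolding Inv_def by auto
  have A: "\<forall>j. dist (f j) (rhs (ul ! snd (st j))) \<le> d \<longrightarrow>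
      (\<exists>j'\<ge>j. snd (st j') = snd (st j) \<and> \<not> pend (st j'))" for d
  proof (induction d)
    case 0
    show ?case
    proof (intro allI impI)
      fix j assume "dist (f j) (rhs (ul ! snd (st j))) \<le> 0"
      then have "\<not> pend (st j)" using nx_ok[OF inv[of j]] unfolding f_def by auto
      then show "\<exists>j'\<ge>j. snd (st j') = snd (st j) \<and> \<not> pend (st j')" by blast
    qed
  next
    case (Suc d)
    show ?case
    proof (intro allI impI)
      fix j assume dj: "dist (f j) (rhs (ul ! snd (st j))) \<le> Suc d"
      show "\<exists>j'\<ge>j. snd (st j') = snd (st j) \<and> \<not> pend (st j')"
      proof (cases "pend (st j)")
        case False
        then show ?thesis by blast
      next
        case True
        then have "snd (st (Suc j)) = snd (st j)"
          "dist (f (Suc j)) (rhs (ul ! snd (st j))) < dist (f j) (rhs (ul ! snd (st j)))"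
          using nx_ok[OF inv[of j]] stS unfolding f_def by auto
        then have "dist (f (Suc j)) (rhs (ul ! snd (st (Suc j)))) \<le> d" "snd (st (Suc j)) = snd (st j)"
          using dj by auto
        then show ?thesis using Suc.IH by (metis Suc_leD)
      qed
    qed
  qed
  have B: "\<exists>j'>j. snd (st j') = Suc (snd (st j)) mod N" for j
  proof -
    obtain j' where j': "j' \<ge> j" "snd (st j') = snd (st j)" "\<not> pend (st j')"
      using A[of "dist (f j) (rhs (ul ! snd (st j)))"] by blast
    then have "snd (st (Suc j')) = Suc (snd (st j)) mod N"
      using nx_ok[OF inv[of j']] stS by auto
    then show ?thesis using j' by (intro exI[of _ "Suc j'"]) auto
  qed
  have C: "\<exists>j'\<ge>j. snd (st j') = (snd (st j) + m) mod N" for m j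
  proof (induction m)
    case 0
    then show ?case using inv[of j] unfolding Inv_def by auto
  next
    case (Suc m)
    then obtain j' where j': "j' \<ge> j" "snd (st j') = (snd (st j) + m) mod N" by blast
    obtain j'' where "j'' > j'" "snd (st j'') = Suc (snd (st j')) mod N" using B by blast
    then show ?case using j' by (intro exI[of _ j'']) (auto simp: mod_Suc_eq)
  qed
  have fair: "\<exists>j\<ge>i. b \<in> f j" if u: "Until a b \<in> f i" for i a b
  proof (rule ccontr)
    assume "\<not> (\<exists>j\<ge>i. b \<in> f j)"
    then have nb: "\<forall>j\<ge>i. b \<notin> f j" by blast
    have uj: "Until a b \<in> f j" if "j \<ge> i" for j
      using prop_chain[OF chf u, of j] nb that by auto
    have "Until a b \<in> U" unfolding U_def using until_cl' inv u unfolding Inv_def f_def by blast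
    then obtain k0 where k0: "k0 < N" "ul ! k0 = Until a b" using ul unfolding N_def by (metis in_set_conv_nth)
    define s where "s = snd (st i)"
    have sN: "s < N" using inv unfolding Inv_def s_def by blast
    have "(s + (k0 + N - s)) mod N = k0" using sN k0 by simp
    then obtain j1 where j1: "j1 \<ge> i" "snd (st j1) = k0" using C[of i "k0 + N - s"] unfolding s_def by auto
    have "\<exists>j'\<ge>j1. snd (st j') = snd (st j1) \<and> \<not> pend (st j')"
      using A[of "dist (f j1) (rhs (ul ! snd (st j1)))"] by blast
    then obtain j2 where j2: "j2 \<ge> j1" "snd (st j2) = k0" "\<not> pend (st j2)"
      using j1 by auto
    then have "\<not> (Until a b \<in> f j2 \<and> b \<notin> f j2)" using k0 unfolding pend_def f_def by simp
    then show False using uj nb j1 j2 by auto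
  qed
  have "f 0 = V0" unfolding f_def using st0 by simp
  then show ?thesis using chf fair by blast
qed

lemma inf_ext:
  assumes ch: "is_chain E \<phi> (nth xs) (enat (length xs))" and P0: "P (last xs)"
    and clo: "\<And>W W'. atom E \<phi> W \<Longrightarrow> atom E \<phi> W' \<Longrightarrow> step E W W' \<Longrightarrow> P W \<Longrightarrow> P W'"
    and suc: "\<And>W. atom E \<phi> W \<Longrightarrow> P W \<Longrightarrow> \<exists>W'. atom E \<phi> W' \<and> step E W W'"
  shows "\<exists>f. is_chain E \<phi> f \<infinity> \<and> acceptable f \<infinity> \<and> prefix_of xs f \<infinity>"
proof -
  note cl = chain_nth_last[OF ch]
  let ?len = "length xs"
  have "\<exists>f. f 0 = last xs \<and> is_chain E \<phi> f \<infinity> \<and> (\<forall>i a b. Until a b \<in> f i \<longrightarrow> (\<exists>j\<ge>i. b \<in> f j))"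
    apply (rule inf_core[where P=P])
       apply (rule cl(2))
      apply (rule P0)
     apply (erule (3) clo)
    apply (erule (1) suc)
    done
  then obtain f where f: "f 0 = last xs" "is_chain E \<phi> f \<infinity>" "\<forall>i a b. Until a b \<in> f i \<longrightarrow> (\<exists>j\<ge>i. b \<in> f j)"
    by blast
  define g where "g i = (if i < ?len then xs ! i else f (i - (?len - 1)))" for i
  have gp: "g i = f (i - (?len - 1))" if "i \<ge> ?len - 1" for i
    using that f(1) cl unfolding g_def by (cases "i = ?len - 1") auto
  have gx: "g i = xs ! i" if "i < ?len" for i using that unfolding g_def by simp
  have lenpos: "?len > 0" using cl by simp
  have chg: "is_chain E \<phi> g \<infinity>"
    unfolding is_chain_def
  proof (intro conjI allI impI)
    show "(\<infinity>::enat) \<noteq> 0" by simp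
  next
    fix i
    show "atom E \<phi> (g i)"
    proof (cases "i < ?len")
      case True
      then show ?thesis using ch gx unfolding is_chain_def by auto
    next
      case False
      then show ?thesis using gp[of i] f(2) unfolding is_chain_def by auto
    qed
  next
    fix i
    show "step E (g i) (g (Suc i))"
    proof (cases "Suc i < ?len")
      case True
      then show ?thesis using ch gx unfolding is_chain_def by auto
    next
      case False
      then have ge: "?len - 1 \<le> i" by simp
      have e: "Suc i - (?len - 1) = Suc (i - (?len - 1))" using ge by arith
      have "g i = f (i - (?len - 1))" "g (Suc i) = f (Suc (i - (?len - 1)))"
        using gp[of i] gp[of "Suc i"] ge e by auto
      then show ?thesis using f(2) unfolding is_chain_def by auto
    qed
  qed
  have acc: "acceptable g \<infinity>"
  proof (rule acc_red[OF chg], intro allI impI)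
    fix i a b assume i: "enat i < \<infinity>" and u: "Until a b \<in> g i"
    show "\<exists>j\<ge>i. enat j < \<infinity> \<and> b \<in> g j"
    proof (rule ccontr)
      assume "\<not> (\<exists>j\<ge>i. enat j < \<infinity> \<and> b \<in> g j)"
      then have nb: "\<forall>j\<ge>i. b \<notin> g j" by auto
      define i' where "i' = max i (?len - 1)"
      have "Until a b \<in> g i'"
        using prop_chain[OF chg u, of i'] nb unfolding i'_def by auto
      moreover have "g i' = f (i' - (?len - 1))" using gp unfolding i'_def by simp
      ultimately obtain j' where j': "j' \<ge> i' - (?len - 1)" "b \<in> f j'" using f(3) by metis
      have "g (j' + (?len - 1)) = f j'" using gp[of "j' + (?len - 1)"] by simp
      moreover have "j' + (?len - 1) \<ge> i" using j' unfolding i'_def by auto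
      ultimately show False using nb j' by metis
    qed
  qed
  have "prefix_of xs g \<infinity>" unfolding prefix_of_def using gx by auto
  then show ?thesis using chg acc by blast
qed

lemma TT_in: "atom E \<phi> W \<Longrightarrow> TT \<in> W"
  by (rule atom_closed[of E \<phi> W TT "{}"]) (auto intro: cl'_cl cl'.until1[OF cl'.ev])

lemma ev_cl': "Until TT (Next FF) \<in> cl' \<phi>"
  by (rule cl'.ev)

theorem lemma1:
  fixes \<phi> :: "'p ltl"
  shows "(\<forall>xs. is_chain AXgen \<phi> (nth xs) (enat (length xs)) \<longrightarrow>
            (\<exists>f n. is_chain AXgen \<phi> f n \<and> acceptable f n \<and> prefix_of xs f n))
       \<and> (\<forall>xs. is_chain AXinf \<phi> (nth xs) (enat (length xs)) \<longrightarrow>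
            (\<exists>f. is_chain AXinf \<phi> f \<infinity> \<and> acceptable f \<infinity> \<and> prefix_of xs f \<infinity>))
       \<and> (\<forall>xs. is_chain AXfin \<phi> (nth xs) (enat (length xs)) \<longrightarrow>
            (\<exists>f m. is_chain AXfin \<phi> f (enat m) \<and> acceptable f (enat m) \<and> prefix_of xs f (enat m)))"
proof (intro conjI allI impI)
  fix xs :: "'p ltl set list"
  assume ch: "is_chain AXgen \<phi> (nth xs) (enat (length xs))"
  note cl = chain_nth_last[OF ch]
  show "\<exists>f n. is_chain AXgen \<phi> f n \<and> acceptable f n \<and> prefix_of xs f n"
  proof (cases "Until TT (Next FF) \<in> last xs")
    case True
    then show ?thesis using fin_ext[OF ch] by blast
  next
    case False
    let ?P = "\<lambda>W. Neg (Until TT (Next FF)) \<in> W"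
    have P0: "?P (last xs)" using False atom_max[OF cl(2) ev_cl'] by blast
    have clo: "?P W'" if "atom AXgen \<phi> W" "atom AXgen \<phi> W'" "step AXgen W W'" "?P W" for W W'
      using neg_until_pres[OF that(1-4) TT_in[OF that(1)]] .
    have suc: "\<exists>W'. atom AXgen \<phi> W' \<and> step AXgen W W'" if W: "atom AXgen \<phi> W" "?P W" for W
    proof (rule has_succ[OF W(1)])
      show "prov AXgen (Imp (conj_set W) (Neg (Next FF)))"
      proof (rule prov_pl1[OF prov.T2'[of AXgen TT "Next FF"]])
        show "\<forall>v. peval v (Iff (Until TT (Next FF)) (Or (Next FF) (And TT (WNext (Until TT (Next FF))))))
            \<longrightarrow> peval v (Imp (conj_set W) (Neg (Next FF)))"
          using W atom_fin[OF W(1)] by fastforce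
      qed
    qed
    have "\<exists>f. is_chain AXgen \<phi> f \<infinity> \<and> acceptable f \<infinity> \<and> prefix_of xs f \<infinity>"
      apply (rule inf_ext[where P="?P"])
         apply (rule ch)
        apply (rule P0)
       apply (erule (3) clo)
      apply (erule (1) suc)
      done
    then show ?thesis by blast
  qed
next
  fix xs :: "'p ltl set list"
  assume ch: "is_chain AXinf \<phi> (nth xs) (enat (length xs))"
  have nf: "prov AXinf (Neg (Next FF))" by (rule prov.Extra) (simp add: AXinf_def)
  have suc: "\<exists>W'. atom AXinf \<phi> W' \<and> step AXinf W W'" if W: "atom AXinf \<phi> W" "True" for W
    by (rule has_succ[OF W(1)], rule prov_pl1[OF nf]) simp
  show "\<exists>f. is_chain AXinf \<phi> f \<infinity> \<and> acceptable f \<infinity> \<and> prefix_of xs f \<infinity>"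
    using inf_ext[of AXinf \<phi> xs "\<lambda>_. True", OF ch _ _ suc] by blast
next
  fix xs :: "'p ltl set list"
  assume ch: "is_chain AXfin \<phi> (nth xs) (enat (length xs))"
  note cl = chain_nth_last[OF ch]
  have ev: "prov AXfin (Until TT (Next FF))" by (rule prov.Extra) (simp add: AXfin_def Ev_def)
  have "Until TT (Next FF) \<in> last xs"
    by (rule atom_closed[OF cl(2) cl'_cl[OF ev_cl'], of "{Until TT (Next FF)}"]) (use ev in auto)
  then show "\<exists>f m. is_chain AXfin \<phi> f (enat m) \<and> acceptable f (enat m) \<and> prefix_of xs f (enat m)"
    using fin_ext[OF ch] by blast
qed

end
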